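(* Let $p$ be a prime and $\mathcal G$ a graph of groups in which each edge group $f_e(G_e)$ is a retract of the vertex group $G_{\tau(e)}$. Then $G=\pi_1\mathcal G$ is $p$-efficient if and only if (1) $G$ is residually $p$-finite, (2) the pro-$p$ topology on $G$ induces the full pro-$p$ topology on $G_v$ for every vertex $v$, and (3) every vertex group $G_v$ is closed in the pro-$p$ topology of $G$.
   Context: The pro-$p$ topology on a group has as basis of neighbourhoods of $1$ the normal subgroups of $p$-power index. For $H\le G$, the pro-$p$ topology on $G$ induces the full pro-$p$ topology on $H$ if for every subgroup $K\le H$ of $p$-power index there is a subgroup $J\le G$ of $p$-power index with $J\cap H\subseteq K$. A subgroup is closed in the pro-$p$ topology if it is an intersection of subgroups of $p$-power index. If $G=\pi_1\mathcal G$ is residually $p$-finite, the pro-$p$ topology on $G$ is called $p$-efficient if the vertex and edge groups of $G$ are closed in the pro-$p$ topology of $G$ and the pro-$p$ topology of $G$ induces the full pro-$p$ topology on each vertex and edge group. *)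

theory Defs
  imports "HOL-Algebra.Algebra"
begin

text \<open>A graph of groups: vertex set, edge set (oriented edges; each edge e stands for the
 pair e, e-bar of Serre's formalism), origin/terminus maps, vertex groups, edge groups and
 the two edge monomorphisms into the vertex groups at the origin and terminus.\<close>

record ('v,'e,'a,'b) gog =
  verts :: "'v set"
  edges :: "'e set"
  src :: "'e \<Rightarrow> 'v"
  tgt :: "'e \<Rightarrow> 'v"
  vgrp :: "'v \<Rightarrow> 'a monoid"
  egrp :: "'e \<Rightarrow> 'b monoid"
  emap_src :: "'e \<Rightarrow> 'b \<Rightarrow> 'a"
  emap_tgt :: "'e \<Rightarrow> 'b \<Rightarrow> 'a"

definition graph_of_groups :: "('v,'e,'a,'b) gog \<Rightarrow> bool" where
  "graph_of_groups \<G> \<longleftrightarrow>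
     verts \<G> \<noteq> {} \<and>
     (\<forall>e\<in>edges \<G>. src \<G> e \<in> verts \<G> \<and> tgt \<G> e \<in> verts \<G>) \<and>
     (\<forall>v\<in>verts \<G>. group (vgrp \<G> v)) \<and>
     (\<forall>e\<in>edges \<G>. group (egrp \<G> e) \<and>
        emap_src \<G> e \<in> hom (egrp \<G> e) (vgrp \<G> (src \<G> e)) \<and>
        inj_on (emap_src \<G> e) (carrier (egrp \<G> e)) \<and>
        emap_tgt \<G> e \<in> hom (egrp \<G> e) (vgrp \<G> (tgt \<G> e)) \<and>
        inj_on (emap_tgt \<G> e) (carrier (egrp \<G> e)))"

definition adj_by :: "('v,'e,'a,'b) gog \<Rightarrow> 'e set \<Rightarrow> ('v \<times> 'v) set" where
  "adj_by \<G> S = {(x, y). \<exists>e\<in>S. (src \<G> e = x \<and> tgt \<G> e = y) \<or> (src \<G> e = y \<and> tgt \<G> e = x)}"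

definition connected_by :: "('v,'e,'a,'b) gog \<Rightarrow> 'e set \<Rightarrow> bool" where
  "connected_by \<G> S \<longleftrightarrow> (\<forall>v\<in>verts \<G>. \<forall>w\<in>verts \<G>. (v, w) \<in> (adj_by \<G> S)\<^sup>*)"

definition maximal_tree :: "('v,'e,'a,'b) gog \<Rightarrow> 'e set \<Rightarrow> bool" where
  "maximal_tree \<G> T \<longleftrightarrow> T \<subseteq> edges \<G> \<and> connected_by \<G> T \<and>
     (\<forall>e\<in>T. \<not> connected_by \<G> (T - {e}))"

datatype ('v,'e,'a) letter = VL 'v 'a | TL 'e bool

definition valid_letter :: "('v,'e,'a,'b) gog \<Rightarrow> ('v,'e,'a) letter \<Rightarrow> bool" where
  "valid_letter \<G> l = (case l of VL v a \<Rightarrow> v \<in> verts \<G> \<and> a \<in> carrier (vgrp \<G> v)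
                                | TL e s \<Rightarrow> e \<in> edges \<G>)"

definition valid_word :: "('v,'e,'a,'b) gog \<Rightarrow> ('v,'e,'a) letter list \<Rightarrow> bool" where
  "valid_word \<G> w \<longleftrightarrow> (\<forall>l\<in>set w. valid_letter \<G> l)"

text \<open>Congruence on words generated by the relations of the presentation of
 pi_1(G, T): vertex group multiplication tables, t_e t_e^-1 = 1, t_e = 1 for e in T,
 and t_e f_tgt(g) t_e^-1 = f_src(g).\<close>

inductive gog_eq :: "('v,'e,'a,'b) gog \<Rightarrow> 'e set \<Rightarrow>
    ('v,'e,'a) letter list \<Rightarrow> ('v,'e,'a) letter list \<Rightarrow> bool"
  for \<G> T where
  refl: "gog_eq \<G> T w w"
| sym: "gog_eq \<G> T u w \<Longrightarrow> gog_eq \<G> T w u"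
| trans: "gog_eq \<G> T u w \<Longrightarrow> gog_eq \<G> T w z \<Longrightarrow> gog_eq \<G> T u z"
| ctx: "gog_eq \<G> T u w \<Longrightarrow> gog_eq \<G> T (x @ u @ y) (x @ w @ y)"
| vone: "v \<in> verts \<G> \<Longrightarrow> gog_eq \<G> T [VL v (\<one>\<^bsub>vgrp \<G> v\<^esub>)] []"
| vmult: "v \<in> verts \<G> \<Longrightarrow> a \<in> carrier (vgrp \<G> v) \<Longrightarrow> b \<in> carrier (vgrp \<G> v) \<Longrightarrow>
           gog_eq \<G> T [VL v a, VL v b] [VL v (a \<otimes>\<^bsub>vgrp \<G> v\<^esub> b)]"
| tinv1: "e \<in> edges \<G> \<Longrightarrow> gog_eq \<G> T [TL e True, TL e False] []"
| tinv2: "e \<in> edges \<G> \<Longrightarrow> gog_eq \<G> T [TL e False, TL e True] []"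
| ttree: "e \<in> T \<Longrightarrow> gog_eq \<G> T [TL e True] []"
| tconj: "e \<in> edges \<G> \<Longrightarrow> g \<in> carrier (egrp \<G> e) \<Longrightarrow>
           gog_eq \<G> T [TL e True, VL (tgt \<G> e) (emap_tgt \<G> e g), TL e False]
                      [VL (src \<G> e) (emap_src \<G> e g)]"

definition gog_class :: "('v,'e,'a,'b) gog \<Rightarrow> 'e set \<Rightarrow> ('v,'e,'a) letter list \<Rightarrow>
    ('v,'e,'a) letter list set" where
  "gog_class \<G> T w = {w'. valid_word \<G> w' \<and> gog_eq \<G> T w w'}"

definition pi1 :: "('v,'e,'a,'b) gog \<Rightarrow> 'e set \<Rightarrow> ('v,'e,'a) letter list set monoid" where
  "pi1 \<G> T = \<lparr> carrier = gog_class \<G> T ` {w. valid_word \<G> w},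
               monoid.mult = (\<lambda>A B. \<Union>a\<in>A. \<Union>b\<in>B. gog_class \<G> T (a @ b)),
               monoid.one = gog_class \<G> T [] \<rparr>"

definition vertex_subgroup :: "('v,'e,'a,'b) gog \<Rightarrow> 'e set \<Rightarrow> 'v \<Rightarrow> ('v,'e,'a) letter list set set" where
  "vertex_subgroup \<G> T v = (\<lambda>a. gog_class \<G> T [VL v a]) ` carrier (vgrp \<G> v)"

definition edge_subgroup_tgt :: "('v,'e,'a,'b) gog \<Rightarrow> 'e set \<Rightarrow> 'e \<Rightarrow> ('v,'e,'a) letter list set set" where
  "edge_subgroup_tgt \<G> T e =
     (\<lambda>g. gog_class \<G> T [VL (tgt \<G> e) (emap_tgt \<G> e g)]) ` carrier (egrp \<G> e)"

definition edge_subgroup_src :: "('v,'e,'a,'b) gog \<Rightarrow> 'e set \<Rightarrow> 'e \<Rightarrow> ('v,'e,'a) letter list set set" where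
  "edge_subgroup_src \<G> T e =
     (\<lambda>g. gog_class \<G> T [VL (src \<G> e) (emap_src \<G> e g)]) ` carrier (egrp \<G> e)"

definition is_retract :: "('g,'m) monoid_scheme \<Rightarrow> 'g set \<Rightarrow> bool" where
  "is_retract K H \<longleftrightarrow> subgroup H K \<and>
     (\<exists>r\<in>hom K K. r ` carrier K \<subseteq> H \<and> (\<forall>h\<in>H. r h = h))"

definition p_power_index :: "('g,'m) monoid_scheme \<Rightarrow> nat \<Rightarrow> 'g set \<Rightarrow> bool" where
  "p_power_index G p N \<longleftrightarrow> (\<exists>k. card (rcosets\<^bsub>G\<^esub> N) = p ^ k)"

definition p_normal :: "('g,'m) monoid_scheme \<Rightarrow> nat \<Rightarrow> 'g set \<Rightarrow> bool" where
  "p_normal G p N \<longleftrightarrow> N \<lhd> G \<and> p_power_index G p N"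

text \<open>Open subgroups of the pro-p topology ("subgroups of p-power index" in this sense):
 subgroups containing a normal subgroup of p-power index.\<close>
definition p_open :: "('g,'m) monoid_scheme \<Rightarrow> nat \<Rightarrow> 'g set \<Rightarrow> bool" where
  "p_open G p K \<longleftrightarrow> subgroup K G \<and> (\<exists>N. p_normal G p N \<and> N \<subseteq> K)"

definition residually_p_finite :: "('g,'m) monoid_scheme \<Rightarrow> nat \<Rightarrow> bool" where
  "residually_p_finite G p \<longleftrightarrow>
     (\<forall>g\<in>carrier G. g \<noteq> \<one>\<^bsub>G\<^esub> \<longrightarrow> (\<exists>N. p_normal G p N \<and> g \<notin> N))"

definition p_closed :: "('g,'m) monoid_scheme \<Rightarrow> nat \<Rightarrow> 'g set \<Rightarrow> bool" where
  "p_closed G p H \<longleftrightarrow> H = \<Inter>{K. p_open G p K \<and> H \<subseteq> K}"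

definition induces_full_p :: "('g,'m) monoid_scheme \<Rightarrow> nat \<Rightarrow> 'g set \<Rightarrow> bool" where
  "induces_full_p G p H \<longleftrightarrow>
     (\<forall>K. p_open (G\<lparr>carrier := H\<rparr>) p K \<longrightarrow> (\<exists>J. p_open G p J \<and> J \<inter> H \<subseteq> K))"

definition p_efficient :: "('v,'e,'a,'b) gog \<Rightarrow> 'e set \<Rightarrow> nat \<Rightarrow> bool" where
  "p_efficient \<G> T p \<longleftrightarrow>
     residually_p_finite (pi1 \<G> T) p \<and>
     (\<forall>v\<in>verts \<G>. p_closed (pi1 \<G> T) p (vertex_subgroup \<G> T v) \<and>
                   induces_full_p (pi1 \<G> T) p (vertex_subgroup \<G> T v)) \<and>
     (\<forall>e\<in>edges \<G>. p_closed (pi1 \<G> T) p (edge_subgroup_tgt \<G> T e) \<and>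
                   induces_full_p (pi1 \<G> T) p (edge_subgroup_tgt \<G> T e) \<and>
                   p_closed (pi1 \<G> T) p (edge_subgroup_src \<G> T e) \<and>
                   induces_full_p (pi1 \<G> T) p (edge_subgroup_src \<G> T e))"

end

theory Submission
  imports Defs "HOL-Computational_Algebra.Primes"
begin


lemma transfer_hom:
  assumes "group A1" "group A2" "group B" "f1 \<in> hom B A1" "inj_on f1 (carrier B)"
    "f2 \<in> hom B A2" "r \<in> hom A1 A1" "r ` carrier A1 \<subseteq> f1 ` carrier B"
  shows "(\<lambda>x. f2 (inv_into (carrier B) f1 (r x))) \<in> hom A1 A2"
proof (rule homI)
  fix x assume x: "x \<in> carrier A1"
  have "r x \<in> f1 ` carrier B" using assms(8) x by blast
  then show "f2 (inv_into (carrier B) f1 (r x)) \<in> carrier A2"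
    using assms(6) by (meson hom_in_carrier inv_into_into)
next
  fix x y assume x: "x \<in> carrier A1" and y: "y \<in> carrier A1"
  obtain g1 where g1: "g1 \<in> carrier B" "r x = f1 g1" using assms(8) x by blast
  obtain g2 where g2: "g2 \<in> carrier B" "r y = f1 g2" using assms(8) y by blast
  have "r (x \<otimes>\<^bsub>A1\<^esub> y) = f1 g1 \<otimes>\<^bsub>A1\<^esub> f1 g2" using assms(7) x y g1 g2 by (simp add: hom_mult)
  also have "\<dots> = f1 (g1 \<otimes>\<^bsub>B\<^esub> g2)" using assms(4) g1 g2 by (simp add: hom_mult)
  finally have e: "r (x \<otimes>\<^bsub>A1\<^esub> y) = f1 (g1 \<otimes>\<^bsub>B\<^esub> g2)" .
  have m: "g1 \<otimes>\<^bsub>B\<^esub> g2 \<in> carrier B" using assms(3) g1 g2 by (simp add: group.is_monoid monoid.m_closed)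
  show "f2 (inv_into (carrier B) f1 (r (x \<otimes>\<^bsub>A1\<^esub> y))) =
        f2 (inv_into (carrier B) f1 (r x)) \<otimes>\<^bsub>A2\<^esub> f2 (inv_into (carrier B) f1 (r y))"
    unfolding e g1(2) g2(2) using inv_into_f_f[OF assms(5)] m g1 g2 assms(6)
    by (simp add: hom_mult)
qed

lemma transfer_eq:
  assumes "inj_on f1 (carrier B)" "\<forall>h\<in>f1 ` carrier B. r h = h" "g \<in> carrier B"
  shows "f2 (inv_into (carrier B) f1 (r (f1 g))) = f2 g"
  using assms by (simp add: inv_into_f_f)

fun tau :: "'e \<Rightarrow> bool \<Rightarrow> ('e \<times> bool) list \<Rightarrow> ('e \<times> bool) list" where
  "tau e b [] = [(e,b)]"
| "tau e b ((e',b')#w) = (if e' = e \<and> b' = (\<not>b) then w else (e,b)#(e',b')#w)"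

fun reduced :: "('e \<times> bool) list \<Rightarrow> bool" where
  "reduced [] = True"
| "reduced [x] = True"
| "reduced (x#y#w) = ((fst x = fst y \<longrightarrow> snd x = snd y) \<and> reduced (y#w))"

lemma reduced_tl: "reduced (x#w) \<Longrightarrow> reduced w"
  by (cases w) auto

lemma tau_red: "reduced w \<Longrightarrow> reduced (tau e b w)"
proof (cases w)
  case Nil then show ?thesis by simp
next
  case (Cons a w')
  assume r: "reduced w"
  obtain e' b' where a: "a = (e',b')" by (cases a)
  show ?thesis using r Cons a by (auto dest: reduced_tl)
qed

lemma tau_inv: "reduced w \<Longrightarrow> tau e (\<not>b) (tau e b w) = w"
proof (cases w)
  case Nil then show ?thesis by simp
next
  case (Cons a w')
  assume r: "reduced w"
  obtain e' b' where a: "a = (e',b')" by (cases a)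
  show ?thesis
  proof (cases "e' = e \<and> b' = (\<not>b)")
    case True
    then show ?thesis using r Cons a
      by (cases w') auto
  next
    case False
    then show ?thesis using Cons a by auto
  qed
qed

locale gogr =
  fixes G :: "('v,'e,'a,'b) gog" and T :: "'e set"
  assumes gog: "graph_of_groups G" and mt: "maximal_tree G T"
    and retr: "\<forall>e\<in>edges G. is_retract (vgrp G (tgt G e)) (emap_tgt G e ` carrier (egrp G e)) \<and>
           is_retract (vgrp G (src G e)) (emap_src G e ` carrier (egrp G e))"
begin

abbreviation "V \<equiv> verts G"
abbreviation "A \<equiv> vgrp G"
abbreviation "B \<equiv> egrp G"
abbreviation "s \<equiv> src G"
abbreviation "t \<equiv> tgt G"
abbreviation "fs \<equiv> emap_src G"
abbreviation "ft \<equiv> emap_tgt G"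

lemma ends: "e \<in> edges G \<Longrightarrow> s e \<in> V \<and> t e \<in> V"
  using gog unfolding graph_of_groups_def by blast
lemma grpV: "v \<in> V \<Longrightarrow> group (A v)"
  using gog unfolding graph_of_groups_def by blast
lemma grpE: "e \<in> edges G \<Longrightarrow> group (B e)"
  using gog unfolding graph_of_groups_def by blast
lemma fs_hom: "e \<in> edges G \<Longrightarrow> fs e \<in> hom (B e) (A (s e))"
  using gog unfolding graph_of_groups_def by blast
lemma ft_hom: "e \<in> edges G \<Longrightarrow> ft e \<in> hom (B e) (A (t e))"
  using gog unfolding graph_of_groups_def by blast
lemma fs_inj: "e \<in> edges G \<Longrightarrow> inj_on (fs e) (carrier (B e))"
  using gog unfolding graph_of_groups_def by blast
lemma ft_inj: "e \<in> edges G \<Longrightarrow> inj_on (ft e) (carrier (B e))"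
  using gog unfolding graph_of_groups_def by blast
lemma T_sub: "T \<subseteq> edges G"
  using mt unfolding maximal_tree_def by blast
lemma T_conn: "connected_by G T"
  using mt unfolding maximal_tree_def by blast
lemma T_min: "e \<in> T \<Longrightarrow> \<not> connected_by G (T - {e})"
  using mt unfolding maximal_tree_def by blast

definition rt where "rt e = (SOME r. r \<in> hom (A (t e)) (A (t e)) \<and> r ` carrier (A (t e)) \<subseteq> ft e ` carrier (B e)
   \<and> (\<forall>h\<in>ft e ` carrier (B e). r h = h))"
definition rs where "rs e = (SOME r. r \<in> hom (A (s e)) (A (s e)) \<and> r ` carrier (A (s e)) \<subseteq> fs e ` carrier (B e)
   \<and> (\<forall>h\<in>fs e ` carrier (B e). r h = h))"

lemma rt: "e \<in> edges G \<Longrightarrow> rt e \<in> hom (A (t e)) (A (t e)) \<and> rt e ` carrier (A (t e)) \<subseteq> ft e ` carrier (B e)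
   \<and> (\<forall>h\<in>ft e ` carrier (B e). rt e h = h)"
proof -
  assume e: "e \<in> edges G"
  then have "is_retract (A (t e)) (ft e ` carrier (B e))" using retr by blast
  then have "\<exists>r. r \<in> hom (A (t e)) (A (t e)) \<and> r ` carrier (A (t e)) \<subseteq> ft e ` carrier (B e)
   \<and> (\<forall>h\<in>ft e ` carrier (B e). r h = h)" unfolding is_retract_def by blast
  then show ?thesis unfolding rt_def by (rule someI_ex)
qed

lemma rs: "e \<in> edges G \<Longrightarrow> rs e \<in> hom (A (s e)) (A (s e)) \<and> rs e ` carrier (A (s e)) \<subseteq> fs e ` carrier (B e)
   \<and> (\<forall>h\<in>fs e ` carrier (B e). rs e h = h)"
proof -
  assume e: "e \<in> edges G"
  then have "is_retract (A (s e)) (fs e ` carrier (B e))" using retr by blast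
  then have "\<exists>r. r \<in> hom (A (s e)) (A (s e)) \<and> r ` carrier (A (s e)) \<subseteq> fs e ` carrier (B e)
   \<and> (\<forall>h\<in>fs e ` carrier (B e). r h = h)" unfolding is_retract_def by blast
  then show ?thesis unfolding rs_def by (rule someI_ex)
qed

definition mts where "mts e = (\<lambda>x. fs e (inv_into (carrier (B e)) (ft e) (rt e x)))"
definition mst where "mst e = (\<lambda>x. ft e (inv_into (carrier (B e)) (fs e) (rs e x)))"

lemma mts_hom: "e \<in> edges G \<Longrightarrow> mts e \<in> hom (A (t e)) (A (s e))"
  unfolding mts_def
  by (rule transfer_hom) (use ends grpV grpE ft_hom ft_inj fs_hom rt in auto)
lemma mst_hom: "e \<in> edges G \<Longrightarrow> mst e \<in> hom (A (s e)) (A (t e))"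
  unfolding mst_def
  by (rule transfer_hom) (use ends grpV grpE fs_hom fs_inj ft_hom rs in auto)
lemma mts_eq: "e \<in> edges G \<Longrightarrow> g \<in> carrier (B e) \<Longrightarrow> mts e (ft e g) = fs e g"
  unfolding mts_def by (rule transfer_eq) (use ft_inj rt in auto)
lemma mst_eq: "e \<in> edges G \<Longrightarrow> g \<in> carrier (B e) \<Longrightarrow> mst e (fs e g) = ft e g"
  unfolding mst_def by (rule transfer_eq) (use fs_inj rs in auto)

end

context gogr begin

abbreviation "R \<equiv> adj_by G T"

definition dist :: "'v \<Rightarrow> 'v \<Rightarrow> nat" where
  "dist u w = (LEAST n. (w,u) \<in> R ^^ n)"

lemma adj_by_mono: "S \<subseteq> S' \<Longrightarrow> adj_by G S \<subseteq> adj_by G S'"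
  unfolding adj_by_def by blast

lemma adj_by_sym: "(a,b) \<in> adj_by G S \<Longrightarrow> (b,a) \<in> adj_by G S"
  unfolding adj_by_def by blast

lemma adj_by_rt_sym: "(a,b) \<in> (adj_by G S)\<^sup>* \<Longrightarrow> (b,a) \<in> (adj_by G S)\<^sup>*"
proof (induction rule: rtrancl_induct)
  case base then show ?case by simp
next
  case (step y z)
  then show ?case using adj_by_sym by (meson converse_rtrancl_into_rtrancl)
qed

lemma edge_adj: "e \<in> S \<Longrightarrow> (s e, t e) \<in> adj_by G S \<and> (t e, s e) \<in> adj_by G S"
  unfolding adj_by_def by blast

lemma conn: "u \<in> V \<Longrightarrow> w \<in> V \<Longrightarrow> (w,u) \<in> R\<^sup>*"
  using T_conn unfolding connected_by_def by blast

lemma dist_path: "u \<in> V \<Longrightarrow> w \<in> V \<Longrightarrow> (w,u) \<in> R ^^ dist u w"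
proof -
  assume "u \<in> V" "w \<in> V"
  then obtain n where "(w,u) \<in> R ^^ n" using conn rtrancl_power by blast
  then show ?thesis unfolding dist_def by (rule LeastI)
qed

lemma dist_le: "(w,u) \<in> R ^^ n \<Longrightarrow> dist u w \<le> n"
  unfolding dist_def by (rule Least_le)

lemma dist_self: "dist u u = 0"
  using dist_le[of u u 0] by simp

lemma dist_0: "u \<in> V \<Longrightarrow> w \<in> V \<Longrightarrow> dist u w = 0 \<Longrightarrow> w = u"
  using dist_path by (metis relpow_0_E)

lemma adj_le: "(x,y) \<in> R \<Longrightarrow> u \<in> V \<Longrightarrow> y \<in> V \<Longrightarrow> dist u x \<le> Suc (dist u y)"
  using dist_path dist_le relpow_Suc_I2 by metis

lemma R_ends: "(x,y) \<in> adj_by G S \<Longrightarrow> S \<subseteq> edges G \<Longrightarrow> x \<in> V \<and> y \<in> V"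
  unfolding adj_by_def using ends by blast

lemma dist_Suc:
  assumes "u \<in> V" "w \<in> V" "dist u w = Suc k"
  shows "\<exists>e\<in>T. \<exists>y. ((s e = w \<and> t e = y) \<or> (s e = y \<and> t e = w)) \<and> dist u y = k"
proof -
  have "(w,u) \<in> R ^^ Suc k" using dist_path assms by metis
  then obtain y where y: "(w,y) \<in> R" "(y,u) \<in> R ^^ k" using relpow_Suc_D2 by metis
  have yV: "y \<in> V" using R_ends[OF y(1) T_sub] by blast
  have "dist u y \<le> k" using dist_le y(2) by blast
  moreover have "Suc k \<le> Suc (dist u y)" using adj_le[OF y(1) assms(1) yV] assms(3) by simp
  ultimately have "dist u y = k" by simp
  moreover obtain e where "e \<in> T" "(s e = w \<and> t e = y) \<or> (s e = y \<and> t e = w)"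
    using y(1) unfolding adj_by_def by blast
  ultimately show ?thesis by blast
qed

definition Tk :: "'v \<Rightarrow> nat \<Rightarrow> 'e set" where
  "Tk u k = {e\<in>T. dist u (s e) \<le> k \<and> dist u (t e) \<le> k \<and> dist u (s e) \<noteq> dist u (t e)}"

lemma Tk_mono: "k \<le> k' \<Longrightarrow> Tk u k \<subseteq> Tk u k'"
  unfolding Tk_def by auto

lemma Tk_path: "u \<in> V \<Longrightarrow> w \<in> V \<Longrightarrow> dist u w = k \<Longrightarrow> (w,u) \<in> (adj_by G (Tk u k))\<^sup>*"
proof (induction k arbitrary: w)
  case 0
  then show ?case using dist_0[OF 0(1,2,3)] by simp
next
  case (Suc k)
  obtain e y where e: "e \<in> T" "(s e = w \<and> t e = y) \<or> (s e = y \<and> t e = w)" "dist u y = k"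
    using dist_Suc[OF Suc.prems] by blast
  have yV: "y \<in> V" using e(1,2) T_sub ends by blast
  have eT: "e \<in> Tk u (Suc k)" using e Suc.prems(3) unfolding Tk_def by auto
  have "(w,y) \<in> adj_by G (Tk u (Suc k))" using eT e(2) unfolding adj_by_def by blast
  moreover have "(y,u) \<in> (adj_by G (Tk u (Suc k)))\<^sup>*"
    using Suc.IH[OF Suc.prems(1) yV e(3)] rtrancl_mono[OF adj_by_mono[OF Tk_mono[of k "Suc k" u]]] by auto
  ultimately show ?case by (rule converse_rtrancl_into_rtrancl)
qed

lemma reroute:
  assumes u: "u \<in> V" and e: "e \<in> T"
    and a: "(s e, u) \<in> (adj_by G (T - {e}))\<^sup>*" and b: "(t e, u) \<in> (adj_by G (T - {e}))\<^sup>*"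
  shows "connected_by G (T - {e})"
proof -
  have *: "(x,u) \<in> (adj_by G (T - {e}))\<^sup>*" if x: "x \<in> V" for x
  proof -
    have "(x,u) \<in> R\<^sup>*" using conn u x by blast
    then show ?thesis
    proof (induction rule: converse_rtrancl_induct)
      case base then show ?case by simp
    next
      case (step y z)
      obtain e' where e': "e' \<in> T" "(s e' = y \<and> t e' = z) \<or> (s e' = z \<and> t e' = y)"
        using step(1) unfolding adj_by_def by blast
      show ?case
      proof (cases "e' = e")
        case True
        then have "y = s e \<or> y = t e" using e' by blast
        then show ?thesis using a b by blast
      next
        case False
        then have "(y,z) \<in> adj_by G (T - {e})" using e' unfolding adj_by_def by blast
        then show ?thesis using step(3) by (rule converse_rtrancl_into_rtrancl)
      qed
    qed
  qed
  show ?thesis unfolding connected_by_def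
  proof (intro ballI)
    fix x y assume "x \<in> V" "y \<in> V"
    then show "(x,y) \<in> (adj_by G (T - {e}))\<^sup>*"
      using *[of x] adj_by_rt_sym[OF *[of y]] by (meson rtrancl_trans)
  qed
qed

definition PE :: "'v \<Rightarrow> 'v \<Rightarrow> 'e \<Rightarrow> bool" where
  "PE u w e \<longleftrightarrow> e \<in> T \<and> ((s e = w \<and> Suc (dist u (t e)) = dist u w) \<or> (t e = w \<and> Suc (dist u (s e)) = dist u w))"

definition pe :: "'v \<Rightarrow> 'v \<Rightarrow> 'e" where
  "pe u w = (SOME e. PE u w e)"

lemma pe_ex: assumes "u \<in> V" "w \<in> V" "w \<noteq> u" shows "PE u w (pe u w)"
proof -
  obtain k where k: "dist u w = Suc k" using dist_0[OF assms(1,2)] assms(3) not0_implies_Suc by blast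
  obtain e y where e: "e \<in> T" "(s e = w \<and> t e = y) \<or> (s e = y \<and> t e = w)" "dist u y = k"
    using dist_Suc[OF assms(1,2) k] by blast
  have "PE u w e" unfolding PE_def using e k by auto
  then show ?thesis unfolding pe_def by (rule someI)
qed

lemma tree_edge:
  assumes u: "u \<in> V" and e: "e \<in> T"
  shows "(Suc (dist u (s e)) = dist u (t e) \<and> pe u (t e) = e) \<or>
         (Suc (dist u (t e)) = dist u (s e) \<and> pe u (s e) = e)"
proof -
  have sV: "s e \<in> V" and tV: "t e \<in> V" using e T_sub ends by auto
  have l1: "dist u (s e) \<le> Suc (dist u (t e))" using adj_le[OF _ u tV] edge_adj[OF e] by blast
  have l2: "dist u (t e) \<le> Suc (dist u (s e))" using adj_le[OF _ u sV] edge_adj[OF e] by blast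
  have neq: "dist u (s e) \<noteq> dist u (t e)"
  proof
    assume eq: "dist u (s e) = dist u (t e)"
    let ?k = "dist u (s e)"
    have sub: "Tk u ?k \<subseteq> T - {e}" unfolding Tk_def using eq by auto
    have "(s e, u) \<in> (adj_by G (T - {e}))\<^sup>*"
      using Tk_path[OF u sV HOL.refl] rtrancl_mono[OF adj_by_mono[OF sub]] by blast
    moreover have "(t e, u) \<in> (adj_by G (T - {e}))\<^sup>*"
      using Tk_path[OF u tV eq[symmetric]] rtrancl_mono[OF adj_by_mono[OF sub]] by blast
    ultimately show False using reroute[OF u e] T_min[OF e] by blast
  qed
  have uniq: "pe u b = e"
    if ab: "(a = s e \<and> b = t e) \<or> (a = t e \<and> b = s e)" and d: "Suc (dist u a) = dist u b" for a b
  proof (rule ccontr)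
    assume ne: "pe u b \<noteq> e"
    have aV: "a \<in> V" and bV: "b \<in> V" using ab sV tV by auto
    have "b \<noteq> u" using d dist_self by force
    then have P: "PE u b (pe u b)" using pe_ex[OF u bV] by blast
    let ?e' = "pe u b"
    obtain c where c: "(s ?e' = b \<and> t ?e' = c) \<or> (t ?e' = b \<and> s ?e' = c)" "Suc (dist u c) = dist u b"
      using P unfolding PE_def by blast
    have e'T: "?e' \<in> T" using P unfolding PE_def by blast
    have cV: "c \<in> V" using c(1) e'T T_sub ends by blast
    let ?k = "dist u a"
    have sub: "Tk u ?k \<subseteq> T - {e}" unfolding Tk_def using ab d by auto
    have pa: "(a, u) \<in> (adj_by G (T - {e}))\<^sup>*"
      using Tk_path[OF u aV HOL.refl] rtrancl_mono[OF adj_by_mono[OF sub]] by blast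
    have pc: "(c, u) \<in> (adj_by G (T - {e}))\<^sup>*"
    proof -
      have "dist u c = ?k" using c(2) d by simp
      then show ?thesis using Tk_path[OF u cV] rtrancl_mono[OF adj_by_mono[OF sub]] by blast
    qed
    have "(b, c) \<in> adj_by G (T - {e})" using c(1) e'T ne unfolding adj_by_def by blast
    then have pb: "(b, u) \<in> (adj_by G (T - {e}))\<^sup>*" using pc by (rule converse_rtrancl_into_rtrancl)
    have "connected_by G (T - {e})" using reroute[OF u e] pa pb ab by blast
    then show False using T_min[OF e] by blast
  qed
  show ?thesis
  proof (cases "dist u (s e) < dist u (t e)")
    case True
    then have "Suc (dist u (s e)) = dist u (t e)" using l2 by simp
    then show ?thesis using uniq[of "s e" "t e"] by blast
  next
    case False
    then have "Suc (dist u (t e)) = dist u (s e)" using l1 neq by simp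
    then show ?thesis using uniq[of "t e" "s e"] by blast
  qed
qed

end


context gogr begin

fun thk :: "'v \<Rightarrow> nat \<Rightarrow> 'v \<Rightarrow> 'a \<Rightarrow> 'a" where
  "thk u 0 w = id"
| "thk u (Suc k) w = (if t (pe u w) = w then thk u k (s (pe u w)) \<circ> mts (pe u w)
                       else thk u k (t (pe u w)) \<circ> mst (pe u w))"

definition th :: "'v \<Rightarrow> 'v \<Rightarrow> 'a \<Rightarrow> 'a" where
  "th u w = thk u (dist u w) w"

lemma th_self: "th u u = id"
  unfolding th_def dist_self by simp

lemma th_step:
  assumes u: "u \<in> V" and w: "w \<in> V" and d: "dist u w = Suc k"
  shows "(t (pe u w) = w \<and> dist u (s (pe u w)) = k \<and> th u w = th u (s (pe u w)) \<circ> mts (pe u w)) \<or>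
         (t (pe u w) \<noteq> w \<and> s (pe u w) = w \<and> dist u (t (pe u w)) = k \<and> th u w = th u (t (pe u w)) \<circ> mst (pe u w))"
proof -
  have "w \<noteq> u" using d dist_self by force
  then have P: "PE u w (pe u w)" using pe_ex[OF u w] by blast
  show ?thesis
  proof (cases "t (pe u w) = w")
    case True
    then have "Suc (dist u (s (pe u w))) = dist u w" using P d unfolding PE_def by auto
    then show ?thesis using True d unfolding th_def by simp
  next
    case False
    then have "s (pe u w) = w \<and> Suc (dist u (t (pe u w))) = dist u w" using P unfolding PE_def by auto
    then show ?thesis using False d unfolding th_def by simp
  qed
qed

lemma th_hom: assumes u: "u \<in> V" shows "w \<in> V \<Longrightarrow> th u w \<in> hom (A w) (A u)"
proof (induction "dist u w" arbitrary: w)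
  case 0
  then have "w = u" using dist_0[OF u] by simp
  then show ?case using th_self grpV[OF u] by (simp add: iso_imp_homomorphism[OF id_iso, unfolded id_def])
next
  case (Suc k)
  let ?e = "pe u w"
  have P: "PE u w ?e" using pe_ex[OF u Suc.prems] Suc.hyps(2) dist_self by force
  then have eE: "?e \<in> edges G" unfolding PE_def using T_sub by blast
  from th_step[OF u Suc.prems Suc.hyps(2)[symmetric]] show ?case
  proof
    assume h: "t ?e = w \<and> dist u (s ?e) = k \<and> th u w = th u (s ?e) \<circ> mts ?e"
    have "th u (s ?e) \<in> hom (A (s ?e)) (A u)" using Suc.hyps(1)[of "s ?e"] h ends[OF eE] by simp
    then show ?thesis using h hom_compose[OF mts_hom[OF eE]] by simp
  next
    assume h: "t ?e \<noteq> w \<and> s ?e = w \<and> dist u (t ?e) = k \<and> th u w = th u (t ?e) \<circ> mst ?e"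
    have "th u (t ?e) \<in> hom (A (t ?e)) (A u)" using Suc.hyps(1)[of "t ?e"] h ends[OF eE] by simp
    then show ?thesis using h hom_compose[OF mst_hom[OF eE]] by simp
  qed
qed

lemma th_cons:
  assumes u: "u \<in> V" and e: "e \<in> T" and g: "g \<in> carrier (B e)"
  shows "th u (t e) (ft e g) = th u (s e) (fs e g)"
proof -
  have eE: "e \<in> edges G" using e T_sub by blast
  have sV: "s e \<in> V" and tV: "t e \<in> V" using ends[OF eE] by auto
  from tree_edge[OF u e] show ?thesis
  proof
    assume h: "Suc (dist u (s e)) = dist u (t e) \<and> pe u (t e) = e"
    from th_step[OF u tV h[THEN conjunct1, symmetric]] h
    have "th u (t e) = th u (s e) \<circ> mts e" by auto
    then show ?thesis using mts_eq[OF eE g] by simp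
  next
    assume h: "Suc (dist u (t e)) = dist u (s e) \<and> pe u (s e) = e"
    then have ne: "t e \<noteq> s e" by auto
    from th_step[OF u sV h[THEN conjunct1, symmetric]] h ne
    have "th u (s e) = th u (t e) \<circ> mst e" by auto
    then show ?thesis using mst_eq[OF eE g] by simp
  qed
qed

fun rho :: "'v \<Rightarrow> ('e \<times> bool) list \<Rightarrow> 'v \<Rightarrow> 'a \<Rightarrow> 'a" where
  "rho v0 [] w = th v0 w"
| "rho v0 ((e,b)#x) w = (if e \<in> edges G - T then
      (if b then rho v0 x (s e) \<circ> mts e \<circ> th (t e) w else rho v0 x (t e) \<circ> mst e \<circ> th (s e) w)
    else (\<lambda>_. \<one>\<^bsub>A v0\<^esub>))"

lemma const_hom: "group H \<Longrightarrow> group K \<Longrightarrow> (\<lambda>_. \<one>\<^bsub>K\<^esub>) \<in> hom H K"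
  by (rule homI) (auto simp: group.is_monoid monoid.one_closed)

lemma rho_hom: assumes v0: "v0 \<in> V" shows "w \<in> V \<Longrightarrow> rho v0 x w \<in> hom (A w) (A v0)"
proof (induction x arbitrary: w)
  case Nil
  then show ?case using th_hom[OF v0] by simp
next
  case (Cons a x)
  obtain e b where a: "a = (e,b)" by (cases a)
  show ?case
  proof (cases "e \<in> edges G - T")
    case True
    then have eE: "e \<in> edges G" by blast
    note E = ends[OF eE]
    show ?thesis
    proof (cases b)
      case True
      have "th (t e) w \<in> hom (A w) (A (t e))" using th_hom E Cons.prems by blast
      then have "mts e \<circ> th (t e) w \<in> hom (A w) (A (s e))" using mts_hom[OF eE] by (rule hom_compose)
      then have "rho v0 x (s e) \<circ> (mts e \<circ> th (t e) w) \<in> hom (A w) (A v0)"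
        using Cons.IH[of "s e"] E hom_compose by metis
      then show ?thesis using a True \<open>e \<in> edges G - T\<close> by (simp add: comp_assoc comp_def)
    next
      case False
      have "th (s e) w \<in> hom (A w) (A (s e))" using th_hom E Cons.prems by blast
      then have "mst e \<circ> th (s e) w \<in> hom (A w) (A (t e))" using mst_hom[OF eE] by (rule hom_compose)
      then have "rho v0 x (t e) \<circ> (mst e \<circ> th (s e) w) \<in> hom (A w) (A v0)"
        using Cons.IH[of "t e"] E hom_compose by metis
      then show ?thesis using a False \<open>e \<in> edges G - T\<close> by (simp add: comp_assoc comp_def)
    qed
  next
    case False
    then show ?thesis using a const_hom[OF grpV[OF Cons.prems] grpV[OF v0]] by auto
  qed
qed

lemma rho_tree:
  assumes v0: "v0 \<in> V" and e: "e \<in> T" and g: "g \<in> carrier (B e)"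
  shows "rho v0 x (t e) (ft e g) = rho v0 x (s e) (fs e g)"
proof (induction x)
  case Nil
  then show ?case using th_cons[OF v0 e g] by simp
next
  case (Cons a x)
  obtain e' b where a: "a = (e',b)" by (cases a)
  have eE: "e' \<in> edges G \<Longrightarrow> s e' \<in> V \<and> t e' \<in> V" using ends by blast
  show ?case using a th_cons[OF _ e g] eE by auto
qed

lemma rho_nt:
  assumes e: "e \<in> edges G - T" and g: "g \<in> carrier (B e)"
  shows "rho v0 (tau e True x) (t e) (ft e g) = rho v0 x (s e) (fs e g)"
proof (cases x)
  case Nil
  then show ?thesis using e mts_eq[of e g] g th_self by simp
next
  case (Cons a x')
  obtain e' b where a: "a = (e',b)" by (cases a)
  show ?thesis
  proof (cases "e' = e \<and> b = False")
    case True
    then show ?thesis using Cons a e mst_eq[of e g] g th_self by simp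
  next
    case False
    then show ?thesis using Cons a e mts_eq[of e g] g th_self by auto
  qed
qed

end

context gogr begin

definition act1 :: "'v \<Rightarrow> ('v,'e,'a) letter \<Rightarrow> (('e \<times> bool) list \<Rightarrow> 'a) \<Rightarrow> (('e \<times> bool) list \<Rightarrow> 'a)" where
  "act1 v0 l st = (case l of
      VL w a \<Rightarrow> if w \<in> V \<and> a \<in> carrier (A w) then (\<lambda>x. rho v0 x w a \<otimes>\<^bsub>A v0\<^esub> st x) else st
    | TL e b \<Rightarrow> if e \<in> edges G - T then (\<lambda>x. st (tau e b x)) else st)"

definition act :: "'v \<Rightarrow> ('v,'e,'a) letter list \<Rightarrow> (('e \<times> bool) list \<Rightarrow> 'a) \<Rightarrow> (('e \<times> bool) list \<Rightarrow> 'a)" where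
  "act v0 ws st = foldr (act1 v0) ws st"

definition good where "good v0 st \<longleftrightarrow> (\<forall>x. st x \<in> carrier (A v0))"
definition eqv where "eqv st st' \<longleftrightarrow> (\<forall>x. reduced x \<longrightarrow> st x = st' x)"

lemma act_Nil[simp]: "act v0 [] st = st" unfolding act_def by simp
lemma act_Cons[simp]: "act v0 (l#ws) st = act1 v0 l (act v0 ws st)" unfolding act_def by simp
lemma act_append: "act v0 (u @ w) st = act v0 u (act v0 w st)" unfolding act_def by simp

lemma act1_good: assumes v0: "v0 \<in> V" shows "good v0 st \<Longrightarrow> good v0 (act1 v0 l st)"
proof (cases l)
  case (VL w a)
  assume g: "good v0 st"
  show ?thesis
  proof (cases "w \<in> V \<and> a \<in> carrier (A w)")
    case True
    have gr: "group (A v0)" using grpV[OF v0] .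
    have "rho v0 x w a \<in> carrier (A v0)" for x
      using hom_in_carrier[OF rho_hom[OF v0, of w x]] True by simp
    then have "rho v0 x w a \<otimes>\<^bsub>A v0\<^esub> st x \<in> carrier (A v0)" for x
      using g gr unfolding good_def by (simp add: group.is_monoid monoid.m_closed)
    then show ?thesis using VL True unfolding good_def act1_def by simp
  next
    case False
    then show ?thesis using g VL unfolding act1_def by auto
  qed
next
  case (TL e b)
  assume g: "good v0 st"
  then show ?thesis using TL unfolding good_def act1_def by auto
qed

lemma act_good: "v0 \<in> V \<Longrightarrow> good v0 st \<Longrightarrow> good v0 (act v0 ws st)"
  by (induction ws) (auto intro: act1_good)

lemma act1_eqv: "eqv st st' \<Longrightarrow> eqv (act1 v0 l st) (act1 v0 l st')"
  unfolding eqv_def act1_def by (cases l) (auto simp: tau_red)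

lemma act_eqv: "eqv st st' \<Longrightarrow> eqv (act v0 ws st) (act v0 ws st')"
  by (induction ws) (auto intro: act1_eqv)

lemma eqv_refl: "eqv st st" unfolding eqv_def by simp
lemma eqv_sym: "eqv st st' \<Longrightarrow> eqv st' st" unfolding eqv_def by simp
lemma eqv_trans: "eqv st st' \<Longrightarrow> eqv st' st'' \<Longrightarrow> eqv st st''" unfolding eqv_def by simp

lemma act_resp:
  assumes v0: "v0 \<in> V"
  shows "gog_eq G T u w \<Longrightarrow> good v0 st \<Longrightarrow> eqv (act v0 u st) (act v0 w st)"
proof (induction arbitrary: st rule: gog_eq.induct)
  case (refl w)
  then show ?case by (simp add: eqv_refl)
next
  case (sym u w)
  then show ?case using eqv_sym by blast
next
  case (trans u w z)
  then show ?case using eqv_trans by blast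
next
  case (ctx u w x y)
  have "good v0 (act v0 y st)" using act_good[OF v0 ctx.prems] .
  then have "eqv (act v0 u (act v0 y st)) (act v0 w (act v0 y st))" using ctx.IH by blast
  then show ?case by (simp add: act_append act_eqv)
next
  case (vone v)
  have gr: "group (A v0)" using grpV[OF v0] .
  have "rho v0 x v \<one>\<^bsub>A v\<^esub> = \<one>\<^bsub>A v0\<^esub>" for x
    using rho_hom[OF v0 vone.hyps] grpV[OF vone.hyps] gr
    by (simp add: group_hom.hom_one group_hom_axioms_def group_hom_def)
  moreover have "\<one>\<^bsub>A v\<^esub> \<in> carrier (A v)" using grpV[OF vone.hyps] by (simp add: group.is_monoid monoid.one_closed)
  moreover have "\<one>\<^bsub>A v0\<^esub> \<otimes>\<^bsub>A v0\<^esub> st x = st x" for x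
    using vone.prems gr unfolding good_def by (simp add: group.is_monoid monoid.l_one)
  ultimately have "act1 v0 (VL v \<one>\<^bsub>A v\<^esub>) st = st"
    using vone.hyps unfolding act1_def by simp
  then show ?case by (simp add: eqv_def)
next
  case (vmult v a b)
  have gr: "group (A v0)" using grpV[OF v0] .
  have gv: "group (A v)" using grpV[OF vmult.hyps(1)] .
  have h: "rho v0 x v \<in> hom (A v) (A v0)" for x using rho_hom[OF v0 vmult.hyps(1)] .
  have ab: "a \<otimes>\<^bsub>A v\<^esub> b \<in> carrier (A v)" using gv vmult.hyps(2,3) by (simp add: group.is_monoid monoid.m_closed)
  have eq: "rho v0 x v a \<otimes>\<^bsub>A v0\<^esub> (rho v0 x v b \<otimes>\<^bsub>A v0\<^esub> st x) = rho v0 x v (a \<otimes>\<^bsub>A v\<^esub> b) \<otimes>\<^bsub>A v0\<^esub> st x" for x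
  proof -
    have c1: "rho v0 x v a \<in> carrier (A v0)" by (rule hom_in_carrier[OF h vmult.hyps(2)])
    have c2: "rho v0 x v b \<in> carrier (A v0)" by (rule hom_in_carrier[OF h vmult.hyps(3)])
    have c3: "st x \<in> carrier (A v0)" using vmult.prems unfolding good_def by simp
    have "rho v0 x v (a \<otimes>\<^bsub>A v\<^esub> b) = rho v0 x v a \<otimes>\<^bsub>A v0\<^esub> rho v0 x v b"
      by (rule hom_mult[OF h vmult.hyps(2,3)])
    then show ?thesis using c1 c2 c3 gr by (simp add: group.is_monoid monoid.m_assoc)
  qed
  have "act v0 [VL v a, VL v b] st = act v0 [VL v (a \<otimes>\<^bsub>A v\<^esub> b)] st"
    using vmult.hyps ab eq by (simp add: act1_def)
  then show ?case by (simp add: eqv_def)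
next
  case (tinv1 e)
  then show ?case unfolding eqv_def using tau_inv[of _ e True] by (auto simp: act1_def)
next
  case (tinv2 e)
  then show ?case unfolding eqv_def using tau_inv[of _ e False] by (auto simp: act1_def)
next
  case (ttree e)
  then show ?case unfolding eqv_def by (simp add: act1_def)
next
  case (tconj e g)
  note E = ends[OF tconj.hyps(1)]
  have c1: "ft e g \<in> carrier (A (t e))" by (rule hom_in_carrier[OF ft_hom[OF tconj.hyps(1)] tconj.hyps(2)])
  have c2: "fs e g \<in> carrier (A (s e))" by (rule hom_in_carrier[OF fs_hom[OF tconj.hyps(1)] tconj.hyps(2)])
  show ?case
  proof (cases "e \<in> T")
    case True
    then show ?thesis using c1 c2 E rho_tree[OF v0 True tconj.hyps(2)] unfolding eqv_def by (simp add: act1_def)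
  next
    case False
    then have eNT: "e \<in> edges G - T" using tconj.hyps(1) by blast
    show ?thesis using c1 c2 E eNT rho_nt[OF eNT tconj.hyps(2)] tau_inv[of _ e True]
      unfolding eqv_def by (simp add: act1_def)
  qed
qed

lemma vertex_inj:
  assumes v0: "v0 \<in> V" and a: "a \<in> carrier (A v0)" and b: "b \<in> carrier (A v0)"
    and eq: "gog_eq G T [VL v0 a] [VL v0 b]"
  shows "a = b"
proof -
  let ?s0 = "\<lambda>x::('e \<times> bool) list. \<one>\<^bsub>A v0\<^esub>"
  have gr: "group (A v0)" using grpV[OF v0] .
  have "good v0 ?s0" unfolding good_def using gr by (simp add: group.is_monoid monoid.one_closed)
  then have "eqv (act v0 [VL v0 a] ?s0) (act v0 [VL v0 b] ?s0)" using act_resp[OF v0 eq] by blast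
  then have "act v0 [VL v0 a] ?s0 [] = act v0 [VL v0 b] ?s0 []" unfolding eqv_def by simp
  then have "a \<otimes>\<^bsub>A v0\<^esub> \<one>\<^bsub>A v0\<^esub> = b \<otimes>\<^bsub>A v0\<^esub> \<one>\<^bsub>A v0\<^esub>"
    using v0 a b th_self by (simp add: act1_def)
  then show ?thesis using a b gr by (simp add: group.is_monoid monoid.r_one)
qed

end


lemma gog_eq_cls: "gog_eq G T u w \<Longrightarrow> gog_class G T u = gog_class G T w"
  unfolding gog_class_def using gog_eq.trans gog_eq.sym by metis

lemma cls_mem: "valid_word G w \<Longrightarrow> w \<in> gog_class G T w"
  unfolding gog_class_def by (auto intro: gog_eq.refl)

lemma cls_eqD: "valid_word G u \<Longrightarrow> gog_class G T u = gog_class G T w \<Longrightarrow> gog_eq G T w u"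
  using cls_mem[of G u T] unfolding gog_class_def by blast

lemma ctx2: "gog_eq G T a a' \<Longrightarrow> gog_eq G T b b' \<Longrightarrow> gog_eq G T (a@b) (a'@b')"
  using gog_eq.ctx[of G T a a' "[]" b] gog_eq.ctx[of G T b b' a' "[]"] gog_eq.trans[of G T "a@b" "a'@b" "a'@b'"]
  by simp

lemma valid_append[simp]: "valid_word G (a@b) \<longleftrightarrow> valid_word G a \<and> valid_word G b"
  unfolding valid_word_def by auto

lemma pi1_mult: "valid_word G a \<Longrightarrow> valid_word G b \<Longrightarrow>
   gog_class G T a \<otimes>\<^bsub>pi1 G T\<^esub> gog_class G T b = gog_class G T (a@b)"
proof -
  assume a: "valid_word G a" and b: "valid_word G b"
  have c: "\<forall>a'\<in>gog_class G T a. \<forall>b'\<in>gog_class G T b. gog_class G T (a'@b') = gog_class G T (a@b)"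
  proof (intro ballI)
    fix a' b' assume "a' \<in> gog_class G T a" "b' \<in> gog_class G T b"
    then have "gog_eq G T a a'" "gog_eq G T b b'" unfolding gog_class_def by auto
    then have "gog_eq G T (a@b) (a'@b')" by (rule ctx2)
    then show "gog_class G T (a'@b') = gog_class G T (a@b)" by (rule gog_eq_cls[symmetric])
  qed
  have m: "a \<in> gog_class G T a" "b \<in> gog_class G T b" using a b cls_mem by auto
  have "(\<Union>a'\<in>gog_class G T a. \<Union>b'\<in>gog_class G T b. gog_class G T (a'@b')) = gog_class G T (a@b)"
  proof (rule equalityI)
    show "(\<Union>a'\<in>gog_class G T a. \<Union>b'\<in>gog_class G T b. gog_class G T (a'@b')) \<subseteq> gog_class G T (a@b)"
      using c by blast
    show "gog_class G T (a@b) \<subseteq> (\<Union>a'\<in>gog_class G T a. \<Union>b'\<in>gog_class G T b. gog_class G T (a'@b'))"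
      using m by blast
  qed
  then show ?thesis unfolding pi1_def by simp
qed

lemma pi1_carrier: "carrier (pi1 G T) = gog_class G T ` {w. valid_word G w}"
  unfolding pi1_def by simp
lemma pi1_one: "\<one>\<^bsub>pi1 G T\<^esub> = gog_class G T []"
  unfolding pi1_def by simp

fun inv_letter :: "('v,'e,'a,'b) gog \<Rightarrow> ('v,'e,'a) letter \<Rightarrow> ('v,'e,'a) letter" where
  "inv_letter G (VL v a) = VL v (inv\<^bsub>vgrp G v\<^esub> a)"
| "inv_letter G (TL e b) = TL e (\<not> b)"

definition invw where "invw G w = rev (map (inv_letter G) w)"

lemma inv_valid: assumes "graph_of_groups G" "valid_word G w" shows "valid_word G (invw G w)"
proof -
  have "valid_letter G (inv_letter G l)" if "valid_letter G l" for l
  proof (cases l)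
    case (VL v a)
    then have "group (vgrp G v)" using that assms(1) unfolding graph_of_groups_def valid_letter_def by auto
    then show ?thesis using VL that unfolding valid_letter_def by (simp add: group.inv_closed)
  next
    case (TL e b)
    then show ?thesis using that unfolding valid_letter_def by simp
  qed
  then show ?thesis using assms(2) unfolding valid_word_def invw_def by auto
qed

lemma inv_cancel: assumes "graph_of_groups G" shows "valid_word G w \<Longrightarrow> gog_eq G T (invw G w @ w) []"
proof (induction w)
  case Nil
  then show ?case by (simp add: invw_def gog_eq.refl)
next
  case (Cons l w)
  have vl: "valid_letter G l" and vw: "valid_word G w" using Cons.prems unfolding valid_word_def by auto
  have lc: "gog_eq G T [inv_letter G l, l] []"
  proof (cases l)
    case (VL v a)
    then have v: "v \<in> verts G" and a: "a \<in> carrier (vgrp G v)" using vl unfolding valid_letter_def by auto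
    have g: "group (vgrp G v)" using v assms unfolding graph_of_groups_def by auto
    have "gog_eq G T [VL v (inv\<^bsub>vgrp G v\<^esub> a), VL v a] [VL v (inv\<^bsub>vgrp G v\<^esub> a \<otimes>\<^bsub>vgrp G v\<^esub> a)]"
      using gog_eq.vmult[OF v] g a by (simp add: group.inv_closed)
    moreover have "inv\<^bsub>vgrp G v\<^esub> a \<otimes>\<^bsub>vgrp G v\<^esub> a = \<one>\<^bsub>vgrp G v\<^esub>" using g a by (simp add: group.l_inv)
    ultimately show ?thesis using VL gog_eq.vone[OF v] gog_eq.trans by fastforce
  next
    case (TL e b)
    then have e: "e \<in> edges G" using vl unfolding valid_letter_def by auto
    then show ?thesis using TL gog_eq.tinv1[OF e] gog_eq.tinv2[OF e] by (cases b) auto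
  qed
  have "gog_eq G T (invw G w @ [inv_letter G l, l] @ w) (invw G w @ [] @ w)"
    by (rule gog_eq.ctx[OF lc])
  moreover have "invw G (l # w) @ l # w = invw G w @ [inv_letter G l, l] @ w" unfolding invw_def by simp
  ultimately show ?case using Cons.IH[OF vw] gog_eq.trans by fastforce
qed

lemma pi1_group: assumes "graph_of_groups G" shows "group (pi1 G T)"
proof (rule groupI)
  fix x y assume "x \<in> carrier (pi1 G T)" "y \<in> carrier (pi1 G T)"
  then obtain a b where "valid_word G a" "valid_word G b" "x = gog_class G T a" "y = gog_class G T b"
    unfolding pi1_carrier by auto
  then show "x \<otimes>\<^bsub>pi1 G T\<^esub> y \<in> carrier (pi1 G T)" unfolding pi1_carrier using pi1_mult by fastforce
next
  show "\<one>\<^bsub>pi1 G T\<^esub> \<in> carrier (pi1 G T)" unfolding pi1_carrier pi1_one by (auto simp: valid_word_def)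
next
  fix x y z assume "x \<in> carrier (pi1 G T)" "y \<in> carrier (pi1 G T)" "z \<in> carrier (pi1 G T)"
  then obtain a b c where "valid_word G a" "valid_word G b" "valid_word G c" "x = gog_class G T a"
     "y = gog_class G T b" "z = gog_class G T c"
    unfolding pi1_carrier by auto
  then show "x \<otimes>\<^bsub>pi1 G T\<^esub> y \<otimes>\<^bsub>pi1 G T\<^esub> z = x \<otimes>\<^bsub>pi1 G T\<^esub> (y \<otimes>\<^bsub>pi1 G T\<^esub> z)"
    using pi1_mult by (metis append_assoc valid_append)
next
  fix x assume "x \<in> carrier (pi1 G T)"
  then obtain a where a: "valid_word G a" "x = gog_class G T a" unfolding pi1_carrier by auto
  have "valid_word G []" by (simp add: valid_word_def)
  then show "\<one>\<^bsub>pi1 G T\<^esub> \<otimes>\<^bsub>pi1 G T\<^esub> x = x" unfolding pi1_one using a pi1_mult by fastforce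
next
  fix x assume "x \<in> carrier (pi1 G T)"
  then obtain a where a: "valid_word G a" "x = gog_class G T a" unfolding pi1_carrier by auto
  have iv: "valid_word G (invw G a)" using inv_valid[OF assms a(1)] .
  have "gog_class G T (invw G a) \<otimes>\<^bsub>pi1 G T\<^esub> x = gog_class G T []"
    using pi1_mult[OF iv a(1)] a(2) gog_eq_cls[OF inv_cancel[OF assms a(1)]] by simp
  moreover have "gog_class G T (invw G a) \<in> carrier (pi1 G T)" unfolding pi1_carrier using iv by auto
  ultimately show "\<exists>y\<in>carrier (pi1 G T). y \<otimes>\<^bsub>pi1 G T\<^esub> x = \<one>\<^bsub>pi1 G T\<^esub>" unfolding pi1_one by blast
qed

lemma iota_hom: assumes "graph_of_groups G" "v \<in> verts G"
  shows "(\<lambda>a. gog_class G T [VL v a]) \<in> hom (vgrp G v) (pi1 G T)"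
proof (rule homI)
  fix a assume "a \<in> carrier (vgrp G v)"
  then have "valid_word G [VL v a]" using assms(2) unfolding valid_word_def valid_letter_def by simp
  then show "gog_class G T [VL v a] \<in> carrier (pi1 G T)" unfolding pi1_carrier by auto
next
  fix a b assume a: "a \<in> carrier (vgrp G v)" and b: "b \<in> carrier (vgrp G v)"
  then have "valid_word G [VL v a]" "valid_word G [VL v b]" using assms(2) unfolding valid_word_def valid_letter_def by simp_all
  then have "gog_class G T [VL v a] \<otimes>\<^bsub>pi1 G T\<^esub> gog_class G T [VL v b] = gog_class G T [VL v a, VL v b]"
    using pi1_mult by fastforce
  also have "\<dots> = gog_class G T [VL v (a \<otimes>\<^bsub>vgrp G v\<^esub> b)]"
    by (rule gog_eq_cls[OF gog_eq.vmult[OF assms(2) a b]])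
  finally show "gog_class G T [VL v (a \<otimes>\<^bsub>vgrp G v\<^esub> b)] =
     gog_class G T [VL v a] \<otimes>\<^bsub>pi1 G T\<^esub> gog_class G T [VL v b]" by simp
qed

lemma (in gogr) iota_inj: assumes "v \<in> V"
  shows "inj_on (\<lambda>a. gog_class G T [VL v a]) (carrier (vgrp G v))"
proof (rule inj_onI)
  fix a b assume a: "a \<in> carrier (vgrp G v)" and b: "b \<in> carrier (vgrp G v)"
    and eq: "gog_class G T [VL v a] = gog_class G T [VL v b]"
  have "valid_word G [VL v a]" using assms a unfolding valid_word_def valid_letter_def by simp
  then have "gog_eq G T [VL v b] [VL v a]" using cls_eqD eq by metis
  then show "a = b" using vertex_inj[OF assms b a] by simp
qed


lemma pindex_hom:
  assumes K: "group K" and Q: "group Q" and h: "\<phi> \<in> hom K Q"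
    and cQ: "card (carrier Q) = p ^ n" and p: "Factorial_Ring.prime p"
  shows "p_normal K p (kernel K Q \<phi>)"
proof -
  interpret gh: group_hom K Q \<phi> using K Q h by (simp add: group_hom_def group_hom_axioms_def)
  have fin: "finite (carrier Q)" using cQ p by (metis card.infinite not_prime_0 power_not_zero)
  let ?I = "\<phi> ` carrier K"
  have sI: "subgroup ?I Q" by (rule gh.img_is_subgroup)
  have gI: "group (Q\<lparr>carrier := ?I\<rparr>)" using group.subgroup_imp_group[OF Q sI] .
  have h2: "\<phi> \<in> hom K (Q\<lparr>carrier := ?I\<rparr>)"
    using h by (auto simp: hom_def)
  interpret gh2: group_hom K "Q\<lparr>carrier := ?I\<rparr>" \<phi> using K gI h2 by (simp add: group_hom_def group_hom_axioms_def)
  have ker: "kernel K (Q\<lparr>carrier := ?I\<rparr>) \<phi> = kernel K Q \<phi>" unfolding kernel_def by simp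
  have "(\<lambda>Y. the_elem (\<phi> ` Y)) \<in> iso (K Mod (kernel K (Q\<lparr>carrier := ?I\<rparr>) \<phi>)) (Q\<lparr>carrier := ?I\<rparr>)"
    by (rule gh2.FactGroup_iso_set) simp
  then have "bij_betw (\<lambda>Y. the_elem (\<phi> ` Y)) (rcosets\<^bsub>K\<^esub> (kernel K Q \<phi>)) ?I"
    unfolding iso_def ker by (simp add: FactGroup_def)
  then have c1: "card (rcosets\<^bsub>K\<^esub> (kernel K Q \<phi>)) = card ?I" by (rule bij_betw_same_card)
  have "card (rcosets\<^bsub>Q\<^esub> ?I) * card ?I = order Q" by (rule group.lagrange[OF Q sI])
  then have "card ?I dvd p ^ n" using cQ unfolding order_def by (metis dvd_triv_right)
  then obtain m where "card ?I = p ^ m" using divides_primepow_nat[OF p] by blast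
  then have "p_power_index K p (kernel K Q \<phi>)" unfolding p_power_index_def using c1 by auto
  then show ?thesis unfolding p_normal_def using gh.normal_kernel by simp
qed

lemma sub_restrict_hom:
  assumes "R \<in> hom (G\<lparr>carrier := H\<rparr>) (G\<lparr>carrier := H\<rparr>)" "R ` H \<subseteq> E"
  shows "R \<in> hom (G\<lparr>carrier := H\<rparr>) (G\<lparr>carrier := E\<rparr>)"
  using assms by (auto simp: hom_def)

lemma full_retract:
  fixes G :: "('g,'m) monoid_scheme" (structure)
  assumes G: "group G" and H: "subgroup H G" and E: "subgroup E G" and EH: "E \<subseteq> H"
    and Rh: "R \<in> hom (G\<lparr>carrier := H\<rparr>) (G\<lparr>carrier := H\<rparr>)" and RE: "R ` H \<subseteq> E"
    and Rid: "\<forall>x\<in>E. R x = x" and full: "induces_full_p G p H" and p: "Factorial_Ring.prime p"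
  shows "induces_full_p G p E"
  unfolding induces_full_p_def
proof (intro allI impI)
  interpret group G by fact
  fix K assume "p_open (G\<lparr>carrier := E\<rparr>) p K"
  then obtain N k where K: "subgroup K (G\<lparr>carrier := E\<rparr>)" and N: "N \<lhd> G\<lparr>carrier := E\<rparr>"
     and cN: "card (rcosets\<^bsub>G\<lparr>carrier := E\<rparr>\<^esub> N) = p ^ k" and NK: "N \<subseteq> K"
    unfolding p_open_def p_normal_def p_power_index_def by blast
  let ?GE = "G\<lparr>carrier := E\<rparr>" and ?GH = "G\<lparr>carrier := H\<rparr>"
  have gGE: "group ?GE" using subgroup_imp_group[OF E] .
  have gGH: "group ?GH" using subgroup_imp_group[OF H] .
  let ?Q = "?GE Mod N"
  have gQ: "group ?Q" using normal.factorgroup_is_group[OF N] .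
  have cQ: "card (carrier ?Q) = p ^ k" using cN by (simp add: FactGroup_def)
  let ?phi = "\<lambda>h. N #>\<^bsub>?GE\<^esub> R h"
  have "?phi \<in> hom ?GH ?Q"
    using Group.hom_compose[OF sub_restrict_hom[OF Rh RE] normal.r_coset_hom_Mod[OF N]] by (simp add: comp_def)
  then have pn: "p_normal ?GH p (kernel ?GH ?Q ?phi)" using pindex_hom[OF gGH gQ _ cQ p] by blast
  let ?K' = "{h\<in>H. R h \<in> K}"
  have sK: "subgroup K G" using incl_subgroup[OF E K] .
  have KE: "K \<subseteq> E" using K subgroup.subset by force
  have Rg: "group_hom ?GH ?GH R" using gGH Rh by (simp add: group_hom_def group_hom_axioms_def)
  have R1: "R \<one> = \<one>" using group_hom.hom_one[OF Rg] by simp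
  have Rinv: "R (inv x) = inv (R x)" if "x \<in> H" for x
  proof -
    have "R (inv\<^bsub>?GH\<^esub> x) = inv\<^bsub>?GH\<^esub> (R x)" using group_hom.hom_inv[OF Rg] that by simp
    moreover have "R x \<in> H" using that RE EH by blast
    ultimately show ?thesis using that H by simp
  qed
  have Rm: "R (x \<otimes> y) = R x \<otimes> R y" if "x \<in> H" "y \<in> H" for x y
    using hom_mult[OF Rh] that by simp
  have sK': "subgroup ?K' G"
  proof (rule subgroupI)
    show "?K' \<subseteq> carrier G" using subgroup.subset[OF H] by blast
    have "\<one> \<in> H" by (rule subgroup.one_closed[OF H])
    moreover have "R \<one> \<in> K" unfolding R1 by (rule subgroup.one_closed[OF sK])
    ultimately show "?K' \<noteq> {}" by blast
  next
    fix a assume a: "a \<in> ?K'"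
    then have aH: "a \<in> H" and aK: "R a \<in> K" by auto
    have "inv a \<in> H" by (rule subgroup.m_inv_closed[OF H aH])
    moreover have "R (inv a) \<in> K" unfolding Rinv[OF aH] by (rule subgroup.m_inv_closed[OF sK aK])
    ultimately show "inv a \<in> ?K'" by blast
  next
    fix a b assume a: "a \<in> ?K'" and b: "b \<in> ?K'"
    then have aH: "a \<in> H" and aK: "R a \<in> K" and bH: "b \<in> H" and bK: "R b \<in> K" by auto
    have "a \<otimes> b \<in> H" by (rule subgroup.m_closed[OF H aH bH])
    moreover have "R (a \<otimes> b) \<in> K" unfolding Rm[OF aH bH] by (rule subgroup.m_closed[OF sK aK bK])
    ultimately show "a \<otimes> b \<in> ?K'" by blast
  qed
  have sK'H: "subgroup ?K' ?GH" using subgroup_incl[OF sK' H] by blast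
  have "kernel ?GH ?Q ?phi \<subseteq> ?K'"
  proof
    fix x assume x: "x \<in> kernel ?GH ?Q ?phi"
    then have xH: "x \<in> H" and eq: "N #>\<^bsub>?GE\<^esub> R x = N" unfolding kernel_def by auto
    have "R x \<in> E" using xH RE by blast
    then have "R x \<in> N #>\<^bsub>?GE\<^esub> R x"
      using group.rcos_self[OF gGE] normal_imp_subgroup[OF N] by simp
    then show "x \<in> ?K'" using eq NK xH by auto
  qed
  then have "p_open ?GH p ?K'" unfolding p_open_def using pn sK'H by blast
  then obtain J where J: "p_open G p J" "J \<inter> H \<subseteq> ?K'" using full unfolding induces_full_p_def by blast
  have "J \<inter> E \<subseteq> K"
  proof
    fix x assume "x \<in> J \<inter> E"
    then show "x \<in> K" using J(2) EH Rid by auto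
  qed
  then show "\<exists>J. p_open G p J \<and> J \<inter> E \<subseteq> K" using J(1) by blast
qed


lemma open_carrier:
  fixes G :: "('g,'m) monoid_scheme" (structure)
  assumes G: "group G"
  shows "p_open G p (carrier G)"
proof -
  interpret group G by fact
  have n: "carrier G \<lhd> G" by (rule normal_self)
  have "rcosets (carrier G) = {carrier G}"
  proof -
    have "carrier G #> x = carrier G" if "x \<in> carrier G" for x
      using subgroup.rcos_const[OF subgroup_self G that] .
    moreover have "\<one> \<in> carrier G" by simp
    ultimately show ?thesis unfolding RCOSETS_def by blast
  qed
  then have "card (rcosets (carrier G)) = p ^ 0" by simp
  then have "p_power_index G p (carrier G)" unfolding p_power_index_def by blast
  then show ?thesis unfolding p_open_def p_normal_def using n subgroup_self by blast
qed

lemma closed_retract: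
  fixes G :: "('g,'m) monoid_scheme" (structure)
  assumes G: "group G" and H: "subgroup H G" and E: "subgroup E G" and EH: "E \<subseteq> H"
    and Rh: "R \<in> hom (G\<lparr>carrier := H\<rparr>) (G\<lparr>carrier := H\<rparr>)" and RE: "R ` H \<subseteq> E"
    and Rid: "\<forall>x\<in>E. R x = x" and full: "induces_full_p G p H" and p: "Factorial_Ring.prime p"
    and closed: "p_closed G p H" and res: "residually_p_finite G p"
  shows "p_closed G p E"
  unfolding p_closed_def
proof (rule equalityI)
  show "E \<subseteq> \<Inter>{K. p_open G p K \<and> E \<subseteq> K}" by blast
next
  interpret group G by fact
  let ?GH = "G\<lparr>carrier := H\<rparr>"
  have gGH: "group ?GH" using subgroup_imp_group[OF H] .
  have Rg: "group_hom ?GH ?GH R" using gGH Rh by (simp add: group_hom_def group_hom_axioms_def)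
  have R1: "R \<one> = \<one>" using group_hom.hom_one[OF Rg] by simp
  have RH: "R x \<in> H" if "x \<in> H" for x using that RE EH by blast
  have Hc: "x \<in> carrier G" if "x \<in> H" for x using that subgroup.subset[OF H] by blast
  have Rinv: "R (inv x) = inv (R x)" if "x \<in> H" for x
  proof -
    have "R (inv\<^bsub>?GH\<^esub> x) = inv\<^bsub>?GH\<^esub> (R x)" using group_hom.hom_inv[OF Rg] that by simp
    then show ?thesis using that H RH[OF that] by simp
  qed
  have Rm: "R (x \<otimes> y) = R x \<otimes> R y" if "x \<in> H" "y \<in> H" for x y
    using hom_mult[OF Rh] that by simp
  show "\<Inter>{K. p_open G p K \<and> E \<subseteq> K} \<subseteq> E"
  proof
    fix g assume g: "g \<in> \<Inter>{K. p_open G p K \<and> E \<subseteq> K}"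
    have gG: "g \<in> carrier G" using g open_carrier[OF G, of p] subgroup.subset[OF E] by blast
    show "g \<in> E"
    proof (rule ccontr)
      assume gE: "g \<notin> E"
      show False
      proof (cases "g \<in> H")
        case False
        then obtain K where "p_open G p K" "H \<subseteq> K" "g \<notin> K"
          using closed unfolding p_closed_def by blast
        then show False using g EH by blast
      next
        case True
        note gH = True
        let ?x = "g \<otimes> inv (R g)"
        have Rgc: "R g \<in> carrier G" using Hc[OF RH[OF gH]] .
        have xc: "?x \<in> carrier G" using gG Rgc by simp
        have "?x \<noteq> \<one>"
        proof
          assume "?x = \<one>"
          moreover have "g = g \<otimes> inv (R g) \<otimes> R g" using gG Rgc by (simp add: m_assoc)
          ultimately have "g = R g" using Rgc by simp
          then show False using gE RE gH by auto
        qed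
        then obtain N where N: "p_normal G p N" "?x \<notin> N" using res xc unfolding residually_p_finite_def by blast
        have Nn: "N \<lhd> G" using N unfolding p_normal_def by blast
        obtain k where cN: "card (rcosets N) = p ^ k" using N unfolding p_normal_def p_power_index_def by blast
        let ?M = "G Mod N"
        let ?Q = "?M \<times>\<times> ?M"
        have gM: "group ?M" using normal.factorgroup_is_group[OF Nn] .
        have gQ: "group ?Q" using DirProd_group[OF gM gM] .
        have cQ: "card (carrier ?Q) = p ^ (k + k)"
          using cN by (simp add: FactGroup_def card_cartesian_product power_add)
        let ?phi = "\<lambda>h. (N #> h, N #> R h)"
        have hphi: "?phi \<in> hom ?GH ?Q"
        proof (rule homI)
          fix h assume "h \<in> carrier ?GH"
          then have h: "h \<in> H" by simp
          show "?phi h \<in> carrier ?Q" using Hc[OF h] Hc[OF RH[OF h]]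
            by (simp add: FactGroup_def RCOSETS_def) blast
        next
          fix h h' assume "h \<in> carrier ?GH" "h' \<in> carrier ?GH"
          then have h: "h \<in> H" and h': "h' \<in> H" by auto
          have "N #> (h \<otimes> h') = (N #> h) <#> (N #> h')"
            using normal.rcos_sum[OF Nn Hc[OF h] Hc[OF h']] by simp
          moreover have "N #> R (h \<otimes> h') = (N #> R h) <#> (N #> R h')"
            using normal.rcos_sum[OF Nn Hc[OF RH[OF h]] Hc[OF RH[OF h']]] Rm[OF h h'] by simp
          ultimately show "?phi (h \<otimes>\<^bsub>?GH\<^esub> h') = ?phi h \<otimes>\<^bsub>?Q\<^esub> ?phi h'" by simp
        qed
        have pn: "p_normal ?GH p (kernel ?GH ?Q ?phi)" using pindex_hom[OF gGH gQ hphi cQ p] .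
        let ?K0 = "{h\<in>H. h \<otimes> inv (R h) \<in> N}"
        have sN: "subgroup N G" using normal_imp_subgroup[OF Nn] .
        have sK0: "subgroup ?K0 G"
        proof (rule subgroupI)
          show "?K0 \<subseteq> carrier G" using Hc by blast
          have "\<one> \<otimes> inv (R \<one>) \<in> N" unfolding R1 using subgroup.one_closed[OF sN] by simp
          then have "\<one> \<in> ?K0" using subgroup.one_closed[OF H] by blast
          then show "?K0 \<noteq> {}" by blast
        next
          fix a assume a: "a \<in> ?K0"
          then have aH: "a \<in> H" and aN: "a \<otimes> inv (R a) \<in> N" by auto
          have ac: "a \<in> carrier G" and rac: "R a \<in> carrier G" using Hc[OF aH] Hc[OF RH[OF aH]] by auto
          have "inv (a \<otimes> inv (R a)) \<in> N" using subgroup.m_inv_closed[OF sN aN] .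
          then have "inv a \<otimes> inv (a \<otimes> inv (R a)) \<otimes> a \<in> N" using normal.inv_op_closed1[OF Nn ac] by blast
          moreover have "inv a \<otimes> inv (a \<otimes> inv (R a)) \<otimes> a = inv a \<otimes> inv (R (inv a))"
            using ac rac Rinv[OF aH] by (simp add: inv_mult_group m_assoc)
          ultimately have "inv a \<otimes> inv (R (inv a)) \<in> N" by simp
          moreover have "inv a \<in> H" using subgroup.m_inv_closed[OF H aH] .
          ultimately show "inv a \<in> ?K0" by blast
        next
          fix a b assume a: "a \<in> ?K0" and b: "b \<in> ?K0"
          then have aH: "a \<in> H" and aN: "a \<otimes> inv (R a) \<in> N" and bH: "b \<in> H" and bN: "b \<otimes> inv (R b) \<in> N" by auto
          have ac: "a \<in> carrier G" and rac: "R a \<in> carrier G" using Hc[OF aH] Hc[OF RH[OF aH]] by auto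
          have bc: "b \<in> carrier G" and rbc: "R b \<in> carrier G" using Hc[OF bH] Hc[OF RH[OF bH]] by auto
          have "a \<otimes> (b \<otimes> inv (R b)) \<otimes> inv a \<in> N" using normal.inv_op_closed2[OF Nn ac bN] .
          then have "a \<otimes> (b \<otimes> inv (R b)) \<otimes> inv a \<otimes> (a \<otimes> inv (R a)) \<in> N"
            using subgroup.m_closed[OF sN _ aN] by blast
          moreover have "a \<otimes> (b \<otimes> inv (R b)) \<otimes> inv a \<otimes> (a \<otimes> inv (R a)) = (a \<otimes> b) \<otimes> inv (R (a \<otimes> b))"
            using ac bc rac rbc Rm[OF aH bH] by (simp add: inv_mult_group m_assoc) (simp add: m_assoc[symmetric])
          ultimately have "(a \<otimes> b) \<otimes> inv (R (a \<otimes> b)) \<in> N" by simp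
          moreover have "a \<otimes> b \<in> H" using subgroup.m_closed[OF H aH bH] .
          ultimately show "a \<otimes> b \<in> ?K0" by blast
        qed
        have sK0H: "subgroup ?K0 ?GH" using subgroup_incl[OF sK0 H] by blast
        have "kernel ?GH ?Q ?phi \<subseteq> ?K0"
        proof
          fix h assume h: "h \<in> kernel ?GH ?Q ?phi"
          then have hH: "h \<in> H" and e1: "N #> h = N" and e2: "N #> R h = N" unfolding kernel_def by auto
          have "h \<in> N" using rcos_self[OF Hc[OF hH] sN] e1 by simp
          moreover have "R h \<in> N" using rcos_self[OF Hc[OF RH[OF hH]] sN] e2 by simp
          ultimately have "h \<otimes> inv (R h) \<in> N" using subgroup.m_closed[OF sN] subgroup.m_inv_closed[OF sN] by blast
          then show "h \<in> ?K0" using hH by blast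
        qed
        then have "p_open ?GH p ?K0" unfolding p_open_def using pn sK0H by blast
        then obtain J where J: "p_open G p J" "J \<inter> H \<subseteq> ?K0" using full unfolding induces_full_p_def by blast
        then obtain N2 where N2: "p_normal G p N2" "N2 \<subseteq> J" unfolding p_open_def by blast
        have N2n: "N2 \<lhd> G" using N2 unfolding p_normal_def by blast
        let ?L = "N2 <#> ?K0"
        have sL: "subgroup ?L G" using mult_norm_subgroup[OF N2n sK0] .
        have one0: "\<one> \<in> ?K0" using subgroup.one_closed[OF sK0] .
        have "N2 \<subseteq> ?L"
        proof
          fix n assume n: "n \<in> N2"
          then have "n = n \<otimes> \<one>" using subgroup.subset[OF normal_imp_subgroup[OF N2n]] by auto
          then show "n \<in> ?L" using n one0 unfolding set_mult_def by blast
        qed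
        then have oL: "p_open G p ?L" unfolding p_open_def using sL N2 by blast
        have "E \<subseteq> ?L"
        proof
          fix e assume e: "e \<in> E"
          have eH: "e \<in> H" using e EH by blast
          have ec: "e \<in> carrier G" using Hc[OF eH] .
          have "e \<otimes> inv (R e) = \<one>" using Rid e ec by simp
          then have "e \<in> ?K0" using eH subgroup.one_closed[OF sN] by simp
          moreover have "e = \<one> \<otimes> e" using ec by simp
          moreover have "\<one> \<in> N2" using subgroup.one_closed[OF normal_imp_subgroup[OF N2n]] .
          ultimately show "e \<in> ?L" unfolding set_mult_def by blast
        qed
        then have "g \<in> ?L" using g oL by blast
        then obtain n k0 where nk: "n \<in> N2" "k0 \<in> ?K0" "g = n \<otimes> k0" unfolding set_mult_def by blast
        have k0H: "k0 \<in> H" using nk(2) by blast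
        have nc: "n \<in> carrier G" using nk(1) subgroup.subset[OF normal_imp_subgroup[OF N2n]] by blast
        have "n = g \<otimes> inv k0" using nk(3) nc Hc[OF k0H] by (simp add: m_assoc)
        moreover have "g \<otimes> inv k0 \<in> H" by (rule subgroup.m_closed[OF H gH subgroup.m_inv_closed[OF H k0H]])
        ultimately have "n \<in> H" by simp
        then have "n \<in> ?K0" using J(2) N2(2) nk(1) by blast
        then have "n \<otimes> k0 \<in> ?K0" by (rule subgroup.m_closed[OF sK0 _ nk(2)])
        then have "g \<in> ?K0" using nk(3) by simp
        then show False using N(2) by blast
      qed
    qed
  qed
qed


lemma retract_transport:
  assumes A: "group A" and P: "group P" and i: "ii \<in> hom A P" and inj: "inj_on ii (carrier A)"
    and ret: "is_retract A Xs"
  shows "\<exists>R. R \<in> hom (P\<lparr>carrier := ii ` carrier A\<rparr>) (P\<lparr>carrier := ii ` carrier A\<rparr>) \<and>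
     R ` (ii ` carrier A) \<subseteq> ii ` Xs \<and> (\<forall>x\<in>ii ` Xs. R x = x) \<and> subgroup (ii ` Xs) P \<and>
     ii ` Xs \<subseteq> ii ` carrier A \<and> subgroup (ii ` carrier A) P"
proof -
  obtain r where sX: "subgroup Xs A" and r: "r \<in> hom A A" and rX: "r ` carrier A \<subseteq> Xs"
    and rid: "\<forall>h\<in>Xs. r h = h"
    using ret unfolding is_retract_def by blast
  interpret gh: group_hom A P ii using A P i by (simp add: group_hom_def group_hom_axioms_def)
  have XA: "Xs \<subseteq> carrier A" using subgroup.subset[OF sX] .
  define R where "R = (\<lambda>y. ii (r (inv_into (carrier A) ii y)))"
  have Ri: "R (ii a) = ii (r a)" if "a \<in> carrier A" for a
    unfolding R_def using inv_into_f_f[OF inj that] by simp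
  have rc: "r a \<in> carrier A" if "a \<in> carrier A" for a using hom_in_carrier[OF r that] .
  have hom: "R \<in> hom (P\<lparr>carrier := ii ` carrier A\<rparr>) (P\<lparr>carrier := ii ` carrier A\<rparr>)"
  proof (rule homI)
    fix y assume "y \<in> carrier (P\<lparr>carrier := ii ` carrier A\<rparr>)"
    then obtain a where a: "a \<in> carrier A" "y = ii a" by auto
    show "R y \<in> carrier (P\<lparr>carrier := ii ` carrier A\<rparr>)" using a Ri rc by simp
  next
    fix y z assume "y \<in> carrier (P\<lparr>carrier := ii ` carrier A\<rparr>)" "z \<in> carrier (P\<lparr>carrier := ii ` carrier A\<rparr>)"
    then obtain a b where a: "a \<in> carrier A" "y = ii a" and b: "b \<in> carrier A" "z = ii b" by auto
    have ab: "a \<otimes>\<^bsub>A\<^esub> b \<in> carrier A" using a b A by (simp add: group.is_monoid monoid.m_closed)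
    have "y \<otimes>\<^bsub>P\<^esub> z = ii (a \<otimes>\<^bsub>A\<^esub> b)" using a b by simp
    then have "R (y \<otimes>\<^bsub>P\<^esub> z) = ii (r (a \<otimes>\<^bsub>A\<^esub> b))" using Ri[OF ab] by simp
    also have "\<dots> = ii (r a \<otimes>\<^bsub>A\<^esub> r b)" using hom_mult[OF r a(1) b(1)] by simp
    also have "\<dots> = ii (r a) \<otimes>\<^bsub>P\<^esub> ii (r b)" using rc a b by simp
    finally show "R (y \<otimes>\<^bsub>P\<lparr>carrier := ii ` carrier A\<rparr>\<^esub> z) =
       R y \<otimes>\<^bsub>P\<lparr>carrier := ii ` carrier A\<rparr>\<^esub> R z" using a b Ri by simp
  qed
  have img: "R ` (ii ` carrier A) \<subseteq> ii ` Xs" using Ri rX by auto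
  have idd: "\<forall>x\<in>ii ` Xs. R x = x" using Ri rid XA by auto
  have s1: "subgroup (ii ` Xs) P" using gh.subgroup_img_is_subgroup[OF sX] .
  have s2: "subgroup (ii ` carrier A) P" using gh.img_is_subgroup .
  show ?thesis using hom img idd s1 s2 XA by blast
qed

context gogr begin

lemma edge_sub:
  assumes v: "v \<in> V" and ret: "is_retract (A v) Xs"
    and full: "induces_full_p (pi1 G T) p (vertex_subgroup G T v)"
    and closed: "p_closed (pi1 G T) p (vertex_subgroup G T v)"
    and res: "residually_p_finite (pi1 G T) p" and p: "Factorial_Ring.prime p"
  shows "p_closed (pi1 G T) p ((\<lambda>a. gog_class G T [VL v a]) ` Xs) \<and>
         induces_full_p (pi1 G T) p ((\<lambda>a. gog_class G T [VL v a]) ` Xs)"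
proof -
  have P: "group (pi1 G T)" using pi1_group[OF gog] .
  let ?i = "\<lambda>a. gog_class G T [VL v a]"
  have vs: "vertex_subgroup G T v = ?i ` carrier (A v)" by (simp add: vertex_subgroup_def)
  from retract_transport[OF grpV[OF v] P iota_hom[OF gog v] iota_inj[OF v] ret]
  obtain R where R0: "R \<in> hom ((pi1 G T)\<lparr>carrier := ?i ` carrier (A v)\<rparr>) ((pi1 G T)\<lparr>carrier := ?i ` carrier (A v)\<rparr>) \<and>
     R ` (?i ` carrier (A v)) \<subseteq> ?i ` Xs \<and> (\<forall>x\<in>?i ` Xs. R x = x) \<and> subgroup (?i ` Xs) (pi1 G T) \<and>
     ?i ` Xs \<subseteq> ?i ` carrier (A v) \<and> subgroup (?i ` carrier (A v)) (pi1 G T)" by (elim exE) (rule that)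
  note R = R0[folded vs, THEN conjunct1] R0[folded vs, THEN conjunct2, THEN conjunct1]
    R0[folded vs, THEN conjunct2, THEN conjunct2, THEN conjunct1]
    R0[folded vs, THEN conjunct2, THEN conjunct2, THEN conjunct2, THEN conjunct1]
    R0[folded vs, THEN conjunct2, THEN conjunct2, THEN conjunct2, THEN conjunct2, THEN conjunct1]
    R0[folded vs, THEN conjunct2, THEN conjunct2, THEN conjunct2, THEN conjunct2, THEN conjunct2]
  show ?thesis
    using closed_retract[OF P R(6) R(4) R(5) R(1) R(2) R(3) full p closed res]
          full_retract[OF P R(6) R(4) R(5) R(1) R(2) R(3) full p] by (rule conjI)
qed

end

theorem lemma4p2:
  fixes \<G> :: "('v,'e,'a,'b) gog" and T :: "'e set" and p :: nat
  assumes "Factorial_Ring.prime p"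
    and "graph_of_groups \<G>"
    and "maximal_tree \<G> T"
    and "\<forall>e\<in>edges \<G>.
           is_retract (vgrp \<G> (tgt \<G> e)) (emap_tgt \<G> e ` carrier (egrp \<G> e)) \<and>
           is_retract (vgrp \<G> (src \<G> e)) (emap_src \<G> e ` carrier (egrp \<G> e))"
  shows "p_efficient \<G> T p \<longleftrightarrow>
           residually_p_finite (pi1 \<G> T) p \<and>
           (\<forall>v\<in>verts \<G>. induces_full_p (pi1 \<G> T) p (vertex_subgroup \<G> T v)) \<and>
           (\<forall>v\<in>verts \<G>. p_closed (pi1 \<G> T) p (vertex_subgroup \<G> T v))"
proof
  assume "p_efficient \<G> T p"
  then show "residually_p_finite (pi1 \<G> T) p \<and>
           (\<forall>v\<in>verts \<G>. induces_full_p (pi1 \<G> T) p (vertex_subgroup \<G> T v)) \<and>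
           (\<forall>v\<in>verts \<G>. p_closed (pi1 \<G> T) p (vertex_subgroup \<G> T v))"
    unfolding p_efficient_def by blast
next
  assume h: "residually_p_finite (pi1 \<G> T) p \<and>
           (\<forall>v\<in>verts \<G>. induces_full_p (pi1 \<G> T) p (vertex_subgroup \<G> T v)) \<and>
           (\<forall>v\<in>verts \<G>. p_closed (pi1 \<G> T) p (vertex_subgroup \<G> T v))"
  interpret gogr \<G> T using assms(2,3,4) by (unfold_locales) auto
  have edges: "p_closed (pi1 \<G> T) p (edge_subgroup_tgt \<G> T e) \<and>
                   induces_full_p (pi1 \<G> T) p (edge_subgroup_tgt \<G> T e) \<and>
                   p_closed (pi1 \<G> T) p (edge_subgroup_src \<G> T e) \<and>
                   induces_full_p (pi1 \<G> T) p (edge_subgroup_src \<G> T e)" if e: "e \<in> edges \<G>" for e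
  proof -
    have E: "tgt \<G> e \<in> verts \<G>" "src \<G> e \<in> verts \<G>" using ends[OF e] by auto
    have "edge_subgroup_tgt \<G> T e = (\<lambda>a. gog_class \<G> T [VL (tgt \<G> e) a]) ` (emap_tgt \<G> e ` carrier (egrp \<G> e))"
      unfolding edge_subgroup_tgt_def by (simp add: image_image)
    moreover have "edge_subgroup_src \<G> T e = (\<lambda>a. gog_class \<G> T [VL (src \<G> e) a]) ` (emap_src \<G> e ` carrier (egrp \<G> e))"
      unfolding edge_subgroup_src_def by (simp add: image_image)
    moreover have "is_retract (vgrp \<G> (tgt \<G> e)) (emap_tgt \<G> e ` carrier (egrp \<G> e))"
      "is_retract (vgrp \<G> (src \<G> e)) (emap_src \<G> e ` carrier (egrp \<G> e))" using assms(4) e by auto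
    moreover have "induces_full_p (pi1 \<G> T) p (vertex_subgroup \<G> T (tgt \<G> e))"
      "induces_full_p (pi1 \<G> T) p (vertex_subgroup \<G> T (src \<G> e))"
      "p_closed (pi1 \<G> T) p (vertex_subgroup \<G> T (tgt \<G> e))"
      "p_closed (pi1 \<G> T) p (vertex_subgroup \<G> T (src \<G> e))"
      "residually_p_finite (pi1 \<G> T) p" using h E by auto
    ultimately show ?thesis
      using edge_sub[OF E(1), of "emap_tgt \<G> e ` carrier (egrp \<G> e)" p]
        edge_sub[OF E(2), of "emap_src \<G> e ` carrier (egrp \<G> e)" p] assms(1) by simp
  qed
  show "p_efficient \<G> T p" unfolding p_efficient_def using h edges by blast
qed


end
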